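(* Let $a>0$, $\mu\in(0,1]$, $\phi\in\mathscr A(a,\mu)$ and $b\ge1$. Then for every local stable leaf $\gamma$ and all $\rho_1,\rho_2\in\mathcal D(a,\mu,\gamma)$, $$\frac{\int_\gamma\phi\rho_1}{\int_\gamma\phi\rho_2}\le e^{b\,\theta_a(\rho_1,\rho_2)}\,\frac{\int_\gamma\rho_1}{\int_\gamma\rho_2}.$$
   Context: Local stable leaves $\gamma$ are the local stable manifolds of points of a uniformly hyperbolic set $\Lambda$ of a $C^2$ diffeomorphism $f$ of a compact Riemannian manifold (embedded disks with induced Riemannian measure $m_\gamma$); $\int_\gamma\phi\rho:=\int_\gamma\phi\rho\,dm_\gamma$; $d$ is the Riemannian distance, with $d\le1$ on the relevant domain $Q$. $\mathcal D(a,\mu,\gamma):=\{\rho:\gamma\to\mathbb R:\ \rho>0,\ \rho(x)\le\rho(y)e^{a d(x,y)^\mu}\ \forall x,y\in\gamma\}$ and $\mathscr A(a,\mu):=\{\phi:Q\to\mathbb R:\ \int_\gamma\phi\rho>0$ for every local stable leaf $\gamma$ and every $\rho\in\mathcal D(a,\mu,\gamma)\}$. Hilbert projective metric of a convex cone $C$: write $v\preceq w$ if $w-v\in C\cup\{0\}$; $\alpha(v_1,v_2):=\sup\{t>0: tv_1\preceq v_2\}$, $\beta(v_1,v_2):=\inf\{s>0: v_2\preceq sv_1\}$, $\theta(v_1,v_2):=\log(\beta/\alpha)$ (with value $+\infty$ if $\alpha=0$ or $\beta=\infty$). $\theta_a$ denotes the Hilbert projective metric of the cone $\mathcal D(a,\mu,\gamma)$.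 *)

theory Defs
  imports "HOL-Analysis.Analysis"
begin

text \<open>Integral over a leaf: \<open>\<integral>\<^sub>\<gamma> f\<close> is the integral of f with respect to the
  leaf measure \<open>m \<gamma>\<close> (the induced Riemannian measure on \<gamma>).\<close>

definition leaf_int :: "('a set \<Rightarrow> 'a measure) \<Rightarrow> 'a set \<Rightarrow> ('a \<Rightarrow> real) \<Rightarrow> real" where
  "leaf_int m \<gamma> f = (\<integral>x. f x \<partial>(m \<gamma>))"

text \<open>The cone D(a,mu,gamma); a density on gamma is represented by a function on the
  ambient type whose values outside gamma are irrelevant.\<close>

definition cone_D :: "real \<Rightarrow> real \<Rightarrow> ('a::metric_space) set \<Rightarrow> ('a \<Rightarrow> real) set" where
  "cone_D a \<mu> \<gamma> = {\<rho>. (\<forall>x\<in>\<gamma>. \<rho> x > 0) \<and>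
      (\<forall>x\<in>\<gamma>. \<forall>y\<in>\<gamma>. \<rho> x \<le> \<rho> y * exp (a * dist x y powr \<mu>))}"

definition class_A :: "'a set set \<Rightarrow> ('a set \<Rightarrow> 'a measure) \<Rightarrow> real \<Rightarrow> real
    \<Rightarrow> (('a::metric_space) \<Rightarrow> real) set" where
  "class_A Leaves m a \<mu> = {\<phi>. \<forall>\<gamma>\<in>Leaves. \<forall>\<rho>\<in>cone_D a \<mu> \<gamma>.
       leaf_int m \<gamma> (\<lambda>x. \<phi> x * \<rho> x) > 0}"

definition cone_le :: "'a set \<Rightarrow> ('a \<Rightarrow> real) set \<Rightarrow> ('a \<Rightarrow> real) \<Rightarrow> ('a \<Rightarrow> real) \<Rightarrow> bool" where
  "cone_le S C v w \<longleftrightarrow> (\<forall>x\<in>S. w x - v x = 0) \<or> (\<lambda>x. w x - v x) \<in> C"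

text \<open>Hilbert projective metric, with value \<infinity> when alpha = 0 (no admissible t)
  or beta = \<infinity> (no admissible s).\<close>

definition hilbert_theta :: "'a set \<Rightarrow> ('a \<Rightarrow> real) set \<Rightarrow> ('a \<Rightarrow> real) \<Rightarrow> ('a \<Rightarrow> real) \<Rightarrow> ereal" where
  "hilbert_theta S C v1 v2 =
     (let A = {t::real. t > 0 \<and> cone_le S C (\<lambda>x. t * v1 x) v2};
          B = {s::real. s > 0 \<and> cone_le S C v2 (\<lambda>x. s * v1 x)}
      in if A = {} \<or> B = {} then \<infinity> else ereal (ln (Inf B / Sup A)))"

end

theory Submission
  imports Defs
begin

lemma cone_cont:
  assumes "\<rho> \<in> cone_D a \<mu> \<gamma>" "0 < \<mu>"
  shows "continuous_on \<gamma> \<rho>"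
  unfolding continuous_on_def
proof (intro ballI)
  fix y assume y: "y \<in> \<gamma>"
  have D: "\<And>x. x \<in> \<gamma> \<Longrightarrow> \<rho> x \<le> \<rho> y * exp (a * dist x y powr \<mu>) \<and> \<rho> y * exp (- (a * dist x y powr \<mu>)) \<le> \<rho> x"
  proof -
    fix x assume x: "x \<in> \<gamma>"
    have 1: "\<rho> x \<le> \<rho> y * exp (a * dist x y powr \<mu>)" using assms(1) x y unfolding cone_D_def by auto
    have 2: "\<rho> y \<le> \<rho> x * exp (a * dist y x powr \<mu>)" using assms(1) x y unfolding cone_D_def by auto
    have "\<rho> y * exp (- (a * dist x y powr \<mu>)) \<le> \<rho> x * exp (a * dist y x powr \<mu>) * exp (- (a * dist x y powr \<mu>))"
      using 2 by (intro mult_right_mono) auto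
    also have "\<dots> = \<rho> x" by (simp add: dist_commute exp_minus field_simps)
    finally show "?thesis x" using 1 by auto
  qed
  have t0: "((\<lambda>x. dist x y powr \<mu>) \<longlongrightarrow> 0) (at y within \<gamma>)"
  proof -
    have "((\<lambda>x. dist x y powr \<mu>) \<longlongrightarrow> 0 powr \<mu>) (at y within \<gamma>)"
    proof (rule tendsto_powr')
      show "((\<lambda>x. dist x y) \<longlongrightarrow> 0) (at y within \<gamma>)"
      proof -
        have "((\<lambda>x. dist x y) \<longlongrightarrow> dist y y) (at y within \<gamma>)"
          by (intro tendsto_dist tendsto_ident_at tendsto_const)
        thus ?thesis by simp
      qed
    qed (use assms(2) in auto)
    thus ?thesis using assms(2) by simp
  qed
  have u: "((\<lambda>x. \<rho> y * exp (a * dist x y powr \<mu>)) \<longlongrightarrow> \<rho> y * exp (a * 0)) (at y within \<gamma>)"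
    by (intro tendsto_intros t0)
  have l: "((\<lambda>x. \<rho> y * exp (- (a * dist x y powr \<mu>))) \<longlongrightarrow> \<rho> y * exp (- (a * 0))) (at y within \<gamma>)"
    by (intro tendsto_intros t0)
  show "(\<rho> \<longlongrightarrow> \<rho> y) (at y within \<gamma>)"
    apply (rule tendsto_sandwich[OF _ _ l[simplified] u[simplified]])
    using D by (auto simp: eventually_at_filter)
qed

lemma cone_order:
  fixes M :: "'a measure" and g v w :: "'a \<Rightarrow> real"
  assumes sp: "space M = S"
    and iv: "integrable M (\<lambda>x. g x * v x)" and iw: "integrable M (\<lambda>x. g x * w x)"
    and pos: "\<forall>\<sigma>\<in>C. integral\<^sup>L M (\<lambda>x. g x * \<sigma> x) > 0"
    and le: "cone_le S C v w"
  shows "integral\<^sup>L M (\<lambda>x. g x * v x) \<le> integral\<^sup>L M (\<lambda>x. g x * w x)"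
proof -
  have diff: "integral\<^sup>L M (\<lambda>x. g x * (w x - v x)) = integral\<^sup>L M (\<lambda>x. g x * w x) - integral\<^sup>L M (\<lambda>x. g x * v x)"
    using iv iw by (simp add: right_diff_distrib)
  from le consider "\<forall>x\<in>S. w x - v x = 0" | "(\<lambda>x. w x - v x) \<in> C" unfolding cone_le_def by blast
  then show ?thesis
  proof cases
    case 1
    have "integral\<^sup>L M (\<lambda>x. g x * (w x - v x)) = integral\<^sup>L M (\<lambda>x. 0)"
      by (rule Bochner_Integration.integral_cong) (use 1 sp in auto)
    then show ?thesis using diff by simp
  next
    case 2
    then show ?thesis using pos diff by fastforce
  qed
qed

theorem lemma4p3:
  fixes Leaves :: "('a::metric_space) set set"
    and m :: "'a set \<Rightarrow> 'a measure"
    and Q :: "'a set"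
    and a \<mu> b :: real
    and \<phi> :: "'a \<Rightarrow> real"
  assumes leaves_Q: "\<Union>Leaves \<subseteq> Q"
    and dist_Q: "\<forall>x\<in>Q. \<forall>y\<in>Q. dist x y \<le> 1"
    and leaf_compact: "\<forall>\<gamma>\<in>Leaves. compact \<gamma>"
    and leaf_space: "\<forall>\<gamma>\<in>Leaves. sets (m \<gamma>) = sets (restrict_space borel \<gamma>)"
    and leaf_finite: "\<forall>\<gamma>\<in>Leaves. finite_measure (m \<gamma>)"
    and leaf_pos: "\<forall>\<gamma>\<in>Leaves. emeasure (m \<gamma>) \<gamma> > 0"
    and a_pos: "a > 0"
    and mu: "0 < \<mu>" "\<mu> \<le> 1"
    and phi: "\<phi> \<in> class_A Leaves m a \<mu>"
    and b: "b \<ge> 1"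
  shows "\<forall>\<gamma>\<in>Leaves. \<forall>\<rho>1\<in>cone_D a \<mu> \<gamma>. \<forall>\<rho>2\<in>cone_D a \<mu> \<gamma>. \<forall>\<theta>::real.
           hilbert_theta \<gamma> (cone_D a \<mu> \<gamma>) \<rho>1 \<rho>2 = ereal \<theta> \<longrightarrow>
           leaf_int m \<gamma> (\<lambda>x. \<phi> x * \<rho>1 x) / leaf_int m \<gamma> (\<lambda>x. \<phi> x * \<rho>2 x)
             \<le> exp (b * \<theta>) * (leaf_int m \<gamma> \<rho>1 / leaf_int m \<gamma> \<rho>2)"
proof (intro ballI allI impI)
  fix \<gamma> \<rho>1 \<rho>2 \<theta>
  assume g: "\<gamma> \<in> Leaves" and r1: "\<rho>1 \<in> cone_D a \<mu> \<gamma>" and r2: "\<rho>2 \<in> cone_D a \<mu> \<gamma>"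
    and th: "hilbert_theta \<gamma> (cone_D a \<mu> \<gamma>) \<rho>1 \<rho>2 = ereal \<theta>"
  define M where "M = m \<gamma>"
  define C where "C = cone_D a \<mu> \<gamma>"
  have sets: "sets M = sets (restrict_space borel \<gamma>)" using leaf_space g M_def by auto
  have sp: "space M = \<gamma>" using sets_eq_imp_space_eq[OF sets] by (simp add: space_restrict_space)
  interpret finite_measure M using leaf_finite g M_def by auto
  have mpos: "emeasure M (space M) > 0" using leaf_pos g sp M_def by auto
  have cpt: "compact \<gamma>" using leaf_compact g by auto
  have G: "integrable M \<sigma> \<and> integral\<^sup>L M \<sigma> > 0" if s: "\<sigma> \<in> C" for \<sigma>
  proof -
    have cont: "continuous_on \<gamma> \<sigma>" using cone_cont s mu unfolding C_def by blast
    have meas: "\<sigma> \<in> borel_measurable M"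
      using borel_measurable_continuous_on_restrict[OF cont] measurable_cong_sets[OF sets refl] by blast
    have "bounded (\<sigma> ` \<gamma>)" using compact_continuous_image[OF cont cpt] compact_imp_bounded by blast
    then obtain B where B: "\<And>x. x \<in> \<gamma> \<Longrightarrow> norm (\<sigma> x) \<le> B" unfolding bounded_iff by auto
    have int: "integrable M \<sigma>"
      by (rule integrable_const_bound[where B=B]) (use B sp meas in auto)
    have spos: "\<And>x. x \<in> space M \<Longrightarrow> \<sigma> x > 0" using s sp unfolding C_def cone_D_def by auto
    have nn: "integral\<^sup>L M \<sigma> \<ge> 0" using spos by (intro integral_nonneg_AE) (auto intro: less_imp_le)
    have "integral\<^sup>L M \<sigma> \<noteq> 0"
    proof
      assume "integral\<^sup>L M \<sigma> = 0"
      then have "AE x in M. \<sigma> x = 0"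
        using integral_nonneg_eq_0_iff_AE[OF int] spos by (auto intro: less_imp_le)
      with AE_space have "AE x in M. False" by eventually_elim (use spos in force)
      then have "emeasure M (space M) = 0" by (subst (asm) AE_iff_measurable[of "space M"]) auto
      then show False using mpos by simp
    qed
    then show ?thesis using int nn by auto
  qed
  have P: "integrable M (\<lambda>x. \<phi> x * \<sigma> x) \<and> integral\<^sup>L M (\<lambda>x. \<phi> x * \<sigma> x) > 0" if s: "\<sigma> \<in> C" for \<sigma>
  proof -
    have "integral\<^sup>L M (\<lambda>x. \<phi> x * \<sigma> x) > 0"
      using phi g s unfolding class_A_def C_def M_def leaf_int_def by auto
    then show ?thesis using not_integrable_integral_eq by fastforce
  qed
  define I1 where "I1 = integral\<^sup>L M (\<lambda>x. \<phi> x * \<rho>1 x)"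
  define I2 where "I2 = integral\<^sup>L M (\<lambda>x. \<phi> x * \<rho>2 x)"
  define J1 where "J1 = integral\<^sup>L M \<rho>1"
  define J2 where "J2 = integral\<^sup>L M \<rho>2"
  have r1C: "\<rho>1 \<in> C" and r2C: "\<rho>2 \<in> C" using r1 r2 C_def by auto
  have I1: "I1 > 0" and I2: "I2 > 0" and J1: "J1 > 0" and J2: "J2 > 0"
    using P[OF r1C] P[OF r2C] G[OF r1C] G[OF r2C] I1_def I2_def J1_def J2_def by auto
  have Ppos: "\<forall>\<sigma>\<in>C. integral\<^sup>L M (\<lambda>x. \<phi> x * \<sigma> x) > 0" using P by blast
  have Gpos: "\<forall>\<sigma>\<in>C. integral\<^sup>L M (\<lambda>x. 1 * \<sigma> x) > 0" using G by simp
  define A where "A = {t::real. t > 0 \<and> cone_le \<gamma> C (\<lambda>x. t * \<rho>1 x) \<rho>2}"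
  define B where "B = {s::real. s > 0 \<and> cone_le \<gamma> C \<rho>2 (\<lambda>x. s * \<rho>1 x)}"
  have At: "t * I1 \<le> I2 \<and> t * J1 \<le> J2" if "t \<in> A" for t
  proof -
    have le: "cone_le \<gamma> C (\<lambda>x. t * \<rho>1 x) \<rho>2" using that A_def by auto
    have "integral\<^sup>L M (\<lambda>x. \<phi> x * (t * \<rho>1 x)) \<le> integral\<^sup>L M (\<lambda>x. \<phi> x * \<rho>2 x)"
      by (rule cone_order[OF sp _ _ Ppos le])
        (use P[OF r1C] P[OF r2C] in \<open>auto simp: mult.left_commute\<close>)
    moreover have "integral\<^sup>L M (\<lambda>x. 1 * (t * \<rho>1 x)) \<le> integral\<^sup>L M (\<lambda>x. 1 * \<rho>2 x)"
      by (rule cone_order[OF sp _ _ Gpos le]) (use G[OF r1C] G[OF r2C] in auto)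
    ultimately show ?thesis unfolding I1_def I2_def J1_def J2_def by (simp add: mult.left_commute)
  qed
  have Bs: "I2 \<le> s * I1 \<and> J2 \<le> s * J1" if "s \<in> B" for s
  proof -
    have le: "cone_le \<gamma> C \<rho>2 (\<lambda>x. s * \<rho>1 x)" using that B_def by auto
    have "integral\<^sup>L M (\<lambda>x. \<phi> x * \<rho>2 x) \<le> integral\<^sup>L M (\<lambda>x. \<phi> x * (s * \<rho>1 x))"
      by (rule cone_order[OF sp _ _ Ppos le])
        (use P[OF r1C] P[OF r2C] in \<open>auto simp: mult.left_commute\<close>)
    moreover have "integral\<^sup>L M (\<lambda>x. 1 * \<rho>2 x) \<le> integral\<^sup>L M (\<lambda>x. 1 * (s * \<rho>1 x))"
      by (rule cone_order[OF sp _ _ Gpos le]) (use G[OF r1C] G[OF r2C] in auto)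
    ultimately show ?thesis unfolding I1_def I2_def J1_def J2_def by (simp add: mult.left_commute)
  qed
  have ne: "A \<noteq> {}" "B \<noteq> {}" and thv: "\<theta> = ln (Inf B / Sup A)"
    using th unfolding hilbert_theta_def Let_def A_def B_def C_def by (auto split: if_splits)
  define c where "c = (I1 / I2) * (J2 / J1)"
  have cpos: "c > 0" using I1 I2 J1 J2 c_def by auto
  have cts: "c * t \<le> s" if "t \<in> A" "s \<in> B" for t s
  proof -
    have t: "t * I1 \<le> I2" "t > 0" using At[OF that(1)] that(1) A_def by auto
    have s: "J2 \<le> s * J1" using Bs[OF that(2)] by auto
    have "c * t = (t * I1 / I2) * (J2 / J1)" using c_def by simp
    also have "\<dots> \<le> 1 * (J2 / J1)"
      using t I2 J1 J2 by (intro mult_right_mono) (auto simp: divide_le_eq)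
    also have "\<dots> \<le> s" using s J1 by (simp add: divide_le_eq mult.commute)
    finally show ?thesis .
  qed
  have tle: "t \<le> s" if "t \<in> A" "s \<in> B" for t s
  proof -
    have "t * J1 \<le> J2" "J2 \<le> s * J1" using At[OF that(1)] Bs[OF that(2)] by auto
    then show ?thesis using J1 by (meson mult_le_cancel_right_pos order_trans)
  qed
  have bddA: "bdd_above A"
  proof -
    obtain s0 where "s0 \<in> B" using ne(2) by auto
    then show ?thesis using tle by (intro bdd_aboveI[of _ s0]) auto
  qed
  have bddB: "bdd_below B" unfolding B_def by (rule bdd_belowI[of _ 0]) auto
  obtain t0 where t0: "t0 \<in> A" using ne by auto
  have supA: "Sup A > 0" using cSup_upper[OF t0 bddA] t0 A_def by auto
  have ct: "c * t \<le> Inf B" if "t \<in> A" for t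
    using cts[OF that] ne(2) by (intro cInf_greatest) auto
  have "c * Sup A \<le> Inf B"
  proof -
    have "Sup A \<le> Inf B / c"
      using ct cpos ne(1) by (intro cSup_least) (auto simp: le_divide_eq mult.commute)
    then show ?thesis using cpos by (simp add: le_divide_eq mult.commute)
  qed
  then have c_le: "c \<le> Inf B / Sup A" using supA by (simp add: le_divide_eq)
  have ratio: "Inf B / Sup A \<ge> c" using c_le .
  have rpos: "Inf B / Sup A > 0" using c_le cpos by linarith
  have ge1: "Inf B / Sup A \<ge> 1"
  proof -
    have "Sup A \<le> Inf B" using tle ne by (intro cSup_least) (auto intro: cInf_greatest)
    then show ?thesis using supA by simp
  qed
  have th0: "\<theta> \<ge> 0" using thv ge1 by simp
  have "exp (b * \<theta>) \<ge> exp \<theta>" using th0 b by (simp add: mult_le_cancel_right1)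
  also have "exp \<theta> = Inf B / Sup A" using thv rpos by simp
  finally have E: "c \<le> exp (b * \<theta>)" using c_le by linarith
  have "I1 / I2 = c * (J1 / J2)" using c_def J1 J2 by (simp add: field_simps)
  also have "\<dots> \<le> exp (b * \<theta>) * (J1 / J2)" using E J1 J2 by (intro mult_right_mono) auto
  finally show "leaf_int m \<gamma> (\<lambda>x. \<phi> x * \<rho>1 x) / leaf_int m \<gamma> (\<lambda>x. \<phi> x * \<rho>2 x)
             \<le> exp (b * \<theta>) * (leaf_int m \<gamma> \<rho>1 / leaf_int m \<gamma> \<rho>2)"
    unfolding leaf_int_def I1_def I2_def J1_def J2_def M_def .
qed
end
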